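(* Let $\Sigma$ be an oriented graph on $n$ vertices with skew adjacency matrix $S$ and walk-matrix $W=W(\Sigma)$, and suppose $W$ is nonsingular. Let $Q$ be a real orthogonal matrix with $Qe=e$ and $Q^{\mathrm T}SQ=S^{\mathrm T}$. Then $Q$ is symmetric. In particular, if $P$ is a permutation matrix with $P^{\mathrm T}SP=S^{\mathrm T}$, then $P$ is symmetric and $P^2=I_n$.
   Context: The skew adjacency matrix $S=(S_{ij})$ of an oriented graph on vertices $v_1,\dots,v_n$ has $S_{ij}=1$ if $(v_i,v_j)$ is a directed edge, $S_{ij}=-1$ if $(v_j,v_i)$ is a directed edge, and $S_{ij}=0$ otherwise. The walk-matrix is $W(\Sigma)=[e,Se,\ldots,S^{n-1}e]$ with $e$ the all-ones vector. *)

theory Defs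
  imports "Jordan_Normal_Form.Matrix" "Jordan_Normal_Form.Determinant"
begin

text \<open>An oriented graph on vertices 0..<n is a relation E (E i j means (v_i,v_j) is a
directed edge) that is irreflexive and has no pair of opposite arcs.\<close>
definition oriented_graph :: "nat \<Rightarrow> (nat \<Rightarrow> nat \<Rightarrow> bool) \<Rightarrow> bool" where
  "oriented_graph n E \<longleftrightarrow> (\<forall>i<n. \<not> E i i) \<and> (\<forall>i<n. \<forall>j<n. \<not> (E i j \<and> E j i))"

definition skew_adj :: "nat \<Rightarrow> (nat \<Rightarrow> nat \<Rightarrow> bool) \<Rightarrow> real mat" where
  "skew_adj n E = mat n n (\<lambda>(i,j). if E i j then 1 else if E j i then -1 else 0)"

definition ones_vec :: "nat \<Rightarrow> real vec" where
  "ones_vec n = vec n (\<lambda>_. 1)"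

definition walk_matrix :: "nat \<Rightarrow> real mat \<Rightarrow> real mat" where
  "walk_matrix n S = mat n n (\<lambda>(i,j). ((S ^\<^sub>m j) *\<^sub>v ones_vec n) $ i)"

definition real_orthogonal_mat :: "nat \<Rightarrow> real mat \<Rightarrow> bool" where
  "real_orthogonal_mat n Q \<longleftrightarrow> Q \<in> carrier_mat n n \<and> Q\<^sup>T * Q = 1\<^sub>m n"

definition permutation_mat :: "nat \<Rightarrow> real mat \<Rightarrow> bool" where
  "permutation_mat n P \<longleftrightarrow> (\<exists>\<sigma>. \<sigma> permutes {..<n} \<and>
     P = mat n n (\<lambda>(i,j). if \<sigma> i = j then 1 else 0))"

end

theory Submission
  imports Defs
begin

lemma smult_mat_vec: "v \<in> carrier_vec (dim_col A) \<Longrightarrow> (c \<cdot>\<^sub>m A) *\<^sub>v v = c \<cdot>\<^sub>v (A *\<^sub>v (v::real vec))"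
  by (intro eq_vecI) (auto simp: mult_mat_vec_def scalar_prod_def sum_distrib_left ac_simps)

lemma anticomm_pow:
  fixes X S :: "real mat"
  assumes X: "X \<in> carrier_mat n n" and S: "S \<in> carrier_mat n n"
    and XS: "X * S = (-1) \<cdot>\<^sub>m (S * X)"
  shows "X * S ^\<^sub>m k = ((-1)^k) \<cdot>\<^sub>m (S ^\<^sub>m k * X)"
proof (induction k)
  case 0
  then show ?case using X S by (intro eq_matI) auto
next
  case (Suc k)
  have Sk: "S ^\<^sub>m k \<in> carrier_mat n n" using S by simp
  have "X * S ^\<^sub>m Suc k = (X * S ^\<^sub>m k) * S" using X S Sk by (simp add: assoc_mult_mat[of X n n _ n S n])
  also have "\<dots> = (((-1)^k) \<cdot>\<^sub>m (S ^\<^sub>m k * X)) * S" using Suc by simp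
  also have "\<dots> = ((-1)^k) \<cdot>\<^sub>m (S ^\<^sub>m k * (X * S))"
  proof -
    have "(S ^\<^sub>m k * X) * S = S ^\<^sub>m k * (X * S)" by (rule assoc_mult_mat[OF Sk X S])
    moreover have "S ^\<^sub>m k * X \<in> carrier_mat n n" using X Sk by simp
    ultimately show ?thesis using S by (simp add: mult_smult_assoc_mat)
  qed
  also have "\<dots> = ((-1)^k) \<cdot>\<^sub>m (S ^\<^sub>m k * ((-1) \<cdot>\<^sub>m (S * X)))" using XS by simp
  also have "\<dots> = ((-1)^Suc k) \<cdot>\<^sub>m (S ^\<^sub>m Suc k * X)"
  proof -
    have "S ^\<^sub>m Suc k * X = S ^\<^sub>m k * (S * X)" using assoc_mult_mat[OF Sk S X] by simp
    moreover have "S * X \<in> carrier_mat n n" using S X by simp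
    ultimately show ?thesis using Sk by (intro eq_matI) (auto simp: mult_smult_distrib)
  qed
  finally show ?case .
qed

lemma anticomm_vec:
  fixes X S :: "real mat"
  assumes X: "X \<in> carrier_mat n n" and S: "S \<in> carrier_mat n n"
    and XS: "X * S = (-1) \<cdot>\<^sub>m (S * X)" and Xe: "X *\<^sub>v ones_vec n = ones_vec n"
  shows "X *\<^sub>v (S ^\<^sub>m k *\<^sub>v ones_vec n) = ((-1)^k) \<cdot>\<^sub>v (S ^\<^sub>m k *\<^sub>v ones_vec n)"
proof -
  have e: "ones_vec n \<in> carrier_vec n" by (simp add: ones_vec_def)
  have Sk: "S ^\<^sub>m k \<in> carrier_mat n n" using S by simp
  have "X *\<^sub>v (S ^\<^sub>m k *\<^sub>v ones_vec n) = (X * S ^\<^sub>m k) *\<^sub>v ones_vec n"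
    using X Sk e by simp
  also have "\<dots> = ((-1)^k) \<cdot>\<^sub>v ((S ^\<^sub>m k * X) *\<^sub>v ones_vec n)"
    using anticomm_pow[OF X S XS] X Sk e by (simp add: smult_mat_vec)
  also have "(S ^\<^sub>m k * X) *\<^sub>v ones_vec n = S ^\<^sub>m k *\<^sub>v ones_vec n"
    using X Sk e Xe by simp
  finally show ?thesis .
qed

lemma main_Q:
  fixes E and n and Q :: "real mat"
  assumes og: "oriented_graph n E"
    and dW: "det (walk_matrix n (skew_adj n E)) \<noteq> 0"
    and Qo: "real_orthogonal_mat n Q" and Qe: "Q *\<^sub>v ones_vec n = ones_vec n"
    and QS: "Q\<^sup>T * skew_adj n E * Q = (skew_adj n E)\<^sup>T"
  shows "Q\<^sup>T = Q"
proof -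
  define S where "S = skew_adj n E"
  define W where "W = walk_matrix n S"
  have Sc: "S \<in> carrier_mat n n" by (simp add: S_def skew_adj_def)
  have Wc: "W \<in> carrier_mat n n" by (simp add: W_def walk_matrix_def)
  have Q: "Q \<in> carrier_mat n n" and QTQ: "Q\<^sup>T * Q = 1\<^sub>m n"
    using Qo by (auto simp: real_orthogonal_mat_def)
  have QT: "Q\<^sup>T \<in> carrier_mat n n" using Q by simp
  have QQT: "Q * Q\<^sup>T = 1\<^sub>m n" using mat_mult_left_right_inverse[OF QT Q QTQ] .
  have e: "ones_vec n \<in> carrier_vec n" by (simp add: ones_vec_def)
  have ST: "S\<^sup>T = (-1) \<cdot>\<^sub>m S"
    using og unfolding S_def skew_adj_def oriented_graph_def
    by (intro eq_matI) auto
  have QS': "Q\<^sup>T * S * Q = (-1) \<cdot>\<^sub>m S" using QS ST by (simp add: S_def)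
  have "Q * (Q\<^sup>T * S * Q) = (Q * Q\<^sup>T) * S * Q"
    using Q QT Sc by (simp add: assoc_mult_mat[of _ n n _ n _ n])
  hence "S * Q = Q * (Q\<^sup>T * S * Q)" using QQT Sc Q by simp
  also have "\<dots> = (-1) \<cdot>\<^sub>m (Q * S)" using QS' Q Sc by (simp add: mult_smult_distrib)
  finally have "S * Q = (-1) \<cdot>\<^sub>m (Q * S)" .
  hence X1: "Q * S = (-1) \<cdot>\<^sub>m (S * Q)" using Q Sc by (intro eq_matI) auto
  have "(Q\<^sup>T * S * Q) * Q\<^sup>T = (Q\<^sup>T * S) * (Q * Q\<^sup>T)"
    using Q QT Sc by (simp add: assoc_mult_mat[of _ n n _ n _ n])
  hence "Q\<^sup>T * S = (Q\<^sup>T * S * Q) * Q\<^sup>T" using QQT QT Sc by simp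
  also have "\<dots> = (-1) \<cdot>\<^sub>m (S * Q\<^sup>T)" using QS' QT Sc by (simp add: mult_smult_assoc_mat)
  finally have X2: "Q\<^sup>T * S = (-1) \<cdot>\<^sub>m (S * Q\<^sup>T)" .
  have QTe: "Q\<^sup>T *\<^sub>v ones_vec n = ones_vec n"
  proof -
    have "Q\<^sup>T *\<^sub>v ones_vec n = Q\<^sup>T *\<^sub>v (Q *\<^sub>v ones_vec n)" using Qe by simp
    also have "\<dots> = (Q\<^sup>T * Q) *\<^sub>v ones_vec n" using Q QT e by simp
    finally show ?thesis using QTQ e by simp
  qed
  have QW: "Q * W = Q\<^sup>T * W"
  proof (rule eq_matI)
    fix i j assume i: "i < dim_row (Q\<^sup>T * W)" and j: "j < dim_col (Q\<^sup>T * W)"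
    have ij: "i < n" "j < n" using i j Q Wc by auto
    have colW: "col W j = S ^\<^sub>m j *\<^sub>v ones_vec n"
      using ij Sc by (intro eq_vecI) (auto simp: W_def walk_matrix_def)
    have "(Q * W) $$ (i,j) = col (Q * W) j $ i" using ij Q Wc by simp
    also have "col (Q * W) j = Q *\<^sub>v col W j" using Q Wc ij by simp
    also have "\<dots> = Q\<^sup>T *\<^sub>v col W j"
      unfolding colW anticomm_vec[OF Q Sc X1 Qe] anticomm_vec[OF QT Sc X2 QTe] ..
    also have "\<dots> = col (Q\<^sup>T * W) j" using QT Wc ij by simp
    finally show "(Q * W) $$ (i,j) = (Q\<^sup>T * W) $$ (i,j)" using ij QT Wc by simp
  next
    show "dim_row (Q * W) = dim_row (Q\<^sup>T * W)" "dim_col (Q * W) = dim_col (Q\<^sup>T * W)"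
      using Q QT Wc by auto
  qed
  have "det W \<noteq> 0" using dW by (simp add: W_def S_def)
  from det_non_zero_imp_unit[OF Wc this, of undefined]
  obtain B where Bc: "B \<in> carrier_mat n n" and WB: "W * B = 1\<^sub>m n"
    unfolding Units_def ring_mat_def by auto
  have "Q = (Q * W) * B" using Q Wc Bc WB by simp
  also have "\<dots> = (Q\<^sup>T * W) * B" using QW by simp
  also have "\<dots> = Q\<^sup>T" using QT Wc Bc WB by simp
  finally show ?thesis by simp
qed

lemma perm_props:
  assumes "permutation_mat n P"
  shows "real_orthogonal_mat n P" "P *\<^sub>v ones_vec n = ones_vec n"
proof -
  obtain \<sigma> where s: "\<sigma> permutes {..<n}" and P: "P = mat n n (\<lambda>(i,j). if \<sigma> i = j then 1 else 0)"
    using assms unfolding permutation_mat_def by auto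
  have si: "\<And>i. i < n \<Longrightarrow> \<sigma> i < n" using permutes_in_image[OF s] by simp
  have inv: "inv_into UNIV \<sigma> permutes {..<n}" using s by (rule permutes_inv)
  have sinv: "\<And>k. \<sigma> (inv_into UNIV \<sigma> k) = k" using s by (simp add: permutes_inverses)
  have "P\<^sup>T * P = 1\<^sub>m n"
  proof (rule eq_matI)
    fix i j assume "i < dim_row (1\<^sub>m n)" "j < dim_col (1\<^sub>m n)"
    hence ij: "i < n" "j < n" by auto
    have "(P\<^sup>T * P) $$ (i,j) = (\<Sum>k<n. (if \<sigma> k = i then 1 else 0) * (if \<sigma> k = j then 1 else (0::real)))"
      using ij by (simp add: P scalar_prod_def atLeast0LessThan)
    also have "\<dots> = (\<Sum>k<n. (if \<sigma> (inv_into UNIV \<sigma> k) = i then 1 else 0) * (if \<sigma> (inv_into UNIV \<sigma> k) = j then 1 else (0::real)))"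
      using sum.permute[OF inv] by (simp add: comp_def)
    also have "\<dots> = (\<Sum>k<n. (if k = i then (if i = j then 1 else 0) else (0::real)))"
      unfolding sinv by (intro sum.cong) auto
    also have "\<dots> = 1\<^sub>m n $$ (i,j)" using ij by simp
    finally show "(P\<^sup>T * P) $$ (i,j) = 1\<^sub>m n $$ (i,j)" .
  qed (auto simp: P)
  thus "real_orthogonal_mat n P" by (simp add: real_orthogonal_mat_def P)
  show "P *\<^sub>v ones_vec n = ones_vec n"
  proof (rule eq_vecI)
    fix i assume "i < dim_vec (ones_vec n)"
    hence i: "i < n" by (simp add: ones_vec_def)
    have "(P *\<^sub>v ones_vec n) $ i = (\<Sum>j<n. if \<sigma> i = j then 1 else (0::real))"
      using i by (simp add: P mult_mat_vec_def scalar_prod_def ones_vec_def atLeast0LessThan)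
    also have "\<dots> = 1" using si[OF i] by simp
    finally show "(P *\<^sub>v ones_vec n) $ i = ones_vec n $ i" using i by (simp add: ones_vec_def)
  qed (simp add: P ones_vec_def)
qed

theorem lemma2p10:
  fixes n :: nat and E :: "nat \<Rightarrow> nat \<Rightarrow> bool"
  assumes "oriented_graph n E"
    and "det (walk_matrix n (skew_adj n E)) \<noteq> 0"
  shows "(\<forall>Q. real_orthogonal_mat n Q \<and> Q *\<^sub>v ones_vec n = ones_vec n
             \<and> Q\<^sup>T * skew_adj n E * Q = (skew_adj n E)\<^sup>T \<longrightarrow> Q\<^sup>T = Q)
      \<and> (\<forall>P. permutation_mat n P \<and> P\<^sup>T * skew_adj n E * P = (skew_adj n E)\<^sup>T
             \<longrightarrow> P\<^sup>T = P \<and> P * P = 1\<^sub>m n)"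
proof (intro conjI allI impI)
  fix Q assume "real_orthogonal_mat n Q \<and> Q *\<^sub>v ones_vec n = ones_vec n
             \<and> Q\<^sup>T * skew_adj n E * Q = (skew_adj n E)\<^sup>T"
  thus "Q\<^sup>T = Q" using main_Q[OF assms] by blast
next
  fix P assume a: "permutation_mat n P \<and> P\<^sup>T * skew_adj n E * P = (skew_adj n E)\<^sup>T"
  hence o: "real_orthogonal_mat n P" and e: "P *\<^sub>v ones_vec n = ones_vec n"
    using perm_props by auto
  show sym: "P\<^sup>T = P" using main_Q[OF assms o e] a by blast
  show "P * P = 1\<^sub>m n" using o sym unfolding real_orthogonal_mat_def by metis
qed

end
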